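(* Outer Multi-Objective RL (OMORL), Functions from Occupancy Measures to Reals (FOMR) and Functions from Trajectory Lotteries to Reals (FTLR) are equally expressive: for every environment $E$, $\mathrm{Ord}_{\mathrm{OMORL}}(E)=\mathrm{Ord}_{\mathrm{FOMR}}(E)=\mathrm{Ord}_{\mathrm{FTLR}}(E)$.
   Context: An environment is a tuple $E=(\mathcal S,\mathcal A,\mathcal T,\mathcal I)$ where $\mathcal S,\mathcal A$ are finite nonempty sets, $\mathcal T:\mathcal S\times\mathcal A\to\Delta(\mathcal S)$ and $\mathcal I\in\Delta(\mathcal S)$. A policy is a map $\pi:\mathcal S\to\Delta(\mathcal A)$ (stationary, possibly stochastic); $\Pi^E$ denotes the set of all policies. A trajectory $\xi=(s_0,a_0,s_1,a_1,\dots)$ is generated under $\pi$ by $s_0\sim\mathcal I$, $a_t\sim\pi(s_t)$, $s_{t+1}\sim\mathcal T(s_t,a_t)$; $\mathbb E^\pi_\xi,\mathbb P^\pi$ denote expectation and probability under this distribution. An objective-specification formalism $X$ assigns to each environment $E$ a set of objective specifications, each inducing a total preorder $\succeq$ on $\Pi^E$; $\mathrm{Ord}_X(E)$ is the set of total preorders so induced. A specification defining a scalar $J:\Pi^E\to\mathbb R$ induces $\pi_1\succeq\pi_2\iff J(\pi_1)\ge J(\pi_2)$. Occupancy measure: for $\gamma\in[0,1)$, $\vec m_\gamma(\pi)\in\mathbb R^{\mathcal S\times\mathcal A\times\mathcal S}$, $\vec m_\gamma(\pi)[s,a,s']=\sum_{t=0}^\infty\gamma^t\,\mathbb P^\pi[s_t=s,a_t=a,s_{t+1}=s']$,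 and $\vec m_\gamma(\Pi^E)=\{\vec m_\gamma(\pi):\pi\in\Pi^E\}$. Trajectory lottery: $L_{k,\pi}$ is the distribution of $(s_0,a_0,\dots,a_{k-1},s_k)$ under $\pi$, $L_\pi=(L_{0,\pi},L_{1,\pi},\dots)$, and $L_{\Pi^E}=\{L_\pi:\pi\in\Pi^E\}$. OMORL: specification $(k,\mathcal R,f,\gamma)$ with $k\in\mathbb N$, $\mathcal R:\mathcal S\times\mathcal A\times\mathcal S\to\mathbb R^k$ with components $\mathcal R_i$, $f:\mathbb R^k\to\mathbb R$, $\gamma\in[0,1)$; $J(\pi)=f(J_1(\pi),\dots,J_k(\pi))$ with $J_i(\pi)=\mathbb E^\pi_\xi[\sum_{t=0}^\infty\gamma^t\mathcal R_i(s_t,a_t,s_{t+1})]$. FOMR: specification $(f,\gamma)$ with $\gamma\in[0,1)$, $f:\vec m_\gamma(\Pi^E)\to\mathbb R$; $J(\pi)=f(\vec m_\gamma(\pi))$. FTLR: specification $(f)$ with $f:L_{\Pi^E}\to\mathbb R$; $J(\pi)=f(L_\pi)$. *)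

theory Defs
  imports "HOL-Probability.Probability"
begin

text \<open>An environment E = (S, A, T, I) is given by finite nonempty types 's, 'a
  (all HOL types are nonempty), a transition kernel T and an initial distribution I. A policy is any map 's => 'a pmf;
  the set of all policies is UNIV.\<close>

type_synonym ('s, 'a) policy = "'s \<Rightarrow> 'a pmf"

text \<open>Distribution of the length-k trajectory prefix (s0,a0,...,a_{k-1},s_k),
  represented as the list [(s0,a0),...,(s_{k-1},a_{k-1})] together with s_k.\<close>

fun traj :: "('s \<Rightarrow> 'a \<Rightarrow> 's pmf) \<Rightarrow> 's pmf \<Rightarrow> ('s, 'a) policy \<Rightarrow> nat
             \<Rightarrow> (('s \<times> 'a) list \<times> 's) pmf" where
  "traj T I \<pi> 0 = map_pmf (\<lambda>s. ([], s)) I"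
| "traj T I \<pi> (Suc k) =
     bind_pmf (traj T I \<pi> k) (\<lambda>(h, s).
       bind_pmf (\<pi> s) (\<lambda>a. map_pmf (\<lambda>s'. (h @ [(s, a)], s')) (T s a)))"

text \<open>The transition (s_t, a_t, s_{t+1}) of a prefix of length > t.\<close>
definition step :: "('s \<times> 'a) list \<times> 's \<Rightarrow> nat \<Rightarrow> 's \<times> 'a \<times> 's" where
  "step x t = (fst (fst x ! t), snd (fst x ! t),
               (if Suc t < length (fst x) then fst (fst x ! Suc t) else snd x))"

definition lottery :: "('s \<Rightarrow> 'a \<Rightarrow> 's pmf) \<Rightarrow> 's pmf \<Rightarrow> ('s, 'a) policy
                       \<Rightarrow> nat \<Rightarrow> (('s \<times> 'a) list \<times> 's) pmf" where
  "lottery T I \<pi> = (\<lambda>k. traj T I \<pi> k)"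

definition occupancy :: "('s \<Rightarrow> 'a \<Rightarrow> 's pmf) \<Rightarrow> 's pmf \<Rightarrow> real \<Rightarrow> ('s, 'a) policy
                         \<Rightarrow> ('s \<times> 'a \<times> 's) \<Rightarrow> real" where
  "occupancy T I \<gamma> \<pi> = (\<lambda>(s, a, s').
     (\<Sum>t. \<gamma> ^ t * measure_pmf.prob (traj T I \<pi> (Suc t)) {x. step x t = (s, a, s')}))"

text \<open>Expected discounted return E[sum_t gamma^t R(s_t,a_t,s_{t+1})], taken as the
  limit of the expectations of the truncated returns sum_{t<n} gamma^t R(...).\<close>
definition disc_return :: "('s \<Rightarrow> 'a \<Rightarrow> 's pmf) \<Rightarrow> 's pmf \<Rightarrow> real
                           \<Rightarrow> ('s \<Rightarrow> 'a \<Rightarrow> 's \<Rightarrow> real) \<Rightarrow> ('s, 'a) policy \<Rightarrow> real" where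
  "disc_return T I \<gamma> R \<pi> =
     lim (\<lambda>n. measure_pmf.expectation (traj T I \<pi> n)
               (\<lambda>x. \<Sum>t<n. \<gamma> ^ t * (case step x t of (s, a, s') \<Rightarrow> R s a s')))"

definition ord_of :: "('p \<Rightarrow> real) \<Rightarrow> ('p \<times> 'p) set" where
  "ord_of J = {(p1, p2). J p1 \<ge> J p2}"

text \<open>OMORL: specification (k, R, f, gamma), R = (R_0,...,R_{k-1}), f : R^k -> R
  (R^k rendered as real lists of length k).\<close>
definition J_OMORL :: "('s \<Rightarrow> 'a \<Rightarrow> 's pmf) \<Rightarrow> 's pmf \<Rightarrow> nat
    \<Rightarrow> (nat \<Rightarrow> 's \<Rightarrow> 'a \<Rightarrow> 's \<Rightarrow> real) \<Rightarrow> (real list \<Rightarrow> real) \<Rightarrow> real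
    \<Rightarrow> ('s, 'a) policy \<Rightarrow> real" where
  "J_OMORL T I k R f \<gamma> \<pi> = f (map (\<lambda>i. disc_return T I \<gamma> (R i) \<pi>) [0..<k])"

definition Ord_OMORL :: "('s \<Rightarrow> 'a \<Rightarrow> 's pmf) \<Rightarrow> 's pmf
    \<Rightarrow> (('s, 'a) policy \<times> ('s, 'a) policy) set set" where
  "Ord_OMORL T I = {ord_of (J_OMORL T I k R f \<gamma>) | k R f \<gamma>. 0 \<le> \<gamma> \<and> \<gamma> < 1}"

text \<open>FOMR: specification (f, gamma), f : m_gamma(Pi) -> R; only its values on the
  set of occupancy measures matter, so f is taken total.\<close>
definition Ord_FOMR :: "('s \<Rightarrow> 'a \<Rightarrow> 's pmf) \<Rightarrow> 's pmf
    \<Rightarrow> (('s, 'a) policy \<times> ('s, 'a) policy) set set" where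
  "Ord_FOMR T I = {ord_of (\<lambda>\<pi>. f (occupancy T I \<gamma> \<pi>)) | f \<gamma>. 0 \<le> \<gamma> \<and> \<gamma> < 1}"

text \<open>FTLR: specification f : L_Pi -> R (taken total likewise).\<close>
definition Ord_FTLR :: "('s \<Rightarrow> 'a \<Rightarrow> 's pmf) \<Rightarrow> 's pmf
    \<Rightarrow> (('s, 'a) policy \<times> ('s, 'a) policy) set set" where
  "Ord_FTLR T I = {ord_of (\<lambda>\<pi>. f (lottery T I \<pi>)) | f. True}"

end

theory Submission
  imports Defs
begin

definition stdist where "stdist T I \<pi> t = map_pmf snd (traj T I \<pi> t)"
definition trip where "trip T I \<pi> t = map_pmf (\<lambda>x. step x t) (traj T I \<pi> (Suc t))"

lemma traj_len: "x \<in> set_pmf (traj T I \<pi> k) \<Longrightarrow> length (fst x) = k"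
  by (induction k arbitrary: x) auto

lemma step_app: "length h = t \<Longrightarrow> step (h @ [(s,a)], s') t = (s,a,s')"
  by (simp add: step_def nth_append)

lemma step_app2: "t < length h \<Longrightarrow> step (h @ [(s,a)], s') t = step (h, s) t"
  by (auto simp add: step_def nth_append)

lemma trip_eq: "trip T I \<pi> t = bind_pmf (stdist T I \<pi> t)
   (\<lambda>s. bind_pmf (\<pi> s) (\<lambda>a. map_pmf (\<lambda>s'. (s,a,s')) (T s a)))"
proof -
  have "trip T I \<pi> t = bind_pmf (traj T I \<pi> t) (\<lambda>x.
     bind_pmf (\<pi> (snd x)) (\<lambda>a. map_pmf (\<lambda>s'. step (fst x @ [(snd x, a)], s') t) (T (snd x) a)))"
    by (simp add: trip_def map_bind_pmf case_prod_beta map_pmf_comp o_def)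
  also have "\<dots> = bind_pmf (traj T I \<pi> t) (\<lambda>x.
     bind_pmf (\<pi> (snd x)) (\<lambda>a. map_pmf (\<lambda>s'. (snd x,a,s')) (T (snd x) a)))"
    by (intro bind_pmf_cong refl) (auto dest!: traj_len simp: step_app)
  finally show ?thesis by (simp add: stdist_def bind_map_pmf case_prod_beta)
qed

lemma map_step_traj: "t < n \<Longrightarrow> map_pmf (\<lambda>x. step x t) (traj T I \<pi> n) = trip T I \<pi> t"
proof (induction n)
  case 0 then show ?case by simp
next
  case (Suc n)
  show ?case
  proof (cases "t = n")
    case True then show ?thesis by (simp add: trip_def)
  next
    case False
    then have tn: "t < n" using Suc by simp
    have "map_pmf (\<lambda>x. step x t) (traj T I \<pi> (Suc n)) = bind_pmf (traj T I \<pi> n) (\<lambda>x.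
     bind_pmf (\<pi> (snd x)) (\<lambda>a. map_pmf (\<lambda>s'. step (fst x @ [(snd x, a)], s') t) (T (snd x) a)))"
      by (simp add: map_bind_pmf case_prod_beta map_pmf_comp o_def)
    also have "\<dots> = bind_pmf (traj T I \<pi> n) (\<lambda>x. return_pmf (step x t))"
      using tn by (intro bind_pmf_cong refl) (auto dest!: traj_len simp: step_app2)
    also have "\<dots> = map_pmf (\<lambda>x. step x t) (traj T I \<pi> n)" by (simp add: map_pmf_def)
    finally show ?thesis using Suc.IH tn by simp
  qed
qed

lemma pmf_trip: "pmf (trip T I \<pi> t) (s0,a0,s0') = pmf (stdist T I \<pi> t) s0 * pmf (\<pi> s0) a0 * pmf (T s0 a0) s0'"
proof -
  have inner: "pmf (bind_pmf (\<pi> s) (\<lambda>a. map_pmf (\<lambda>s'. (s,a,s')) (T s a))) (s0,a0,s0') =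
     (if s = s0 then pmf (\<pi> s0) a0 * pmf (T s0 a0) s0' else 0)" for s
  proof -
    have "pmf (bind_pmf (\<pi> s) (\<lambda>a. map_pmf (\<lambda>s'. (s,a,s')) (T s a))) (s0,a0,s0') =
      (\<integral>a. pmf (map_pmf (\<lambda>s'. (s,a,s')) (T s a)) (s0,a0,s0') \<partial>measure_pmf (\<pi> s))"
      by (rule pmf_bind)
    also have "\<dots> = (\<integral>a. (if s = s0 \<and> a = a0 then pmf (T s0 a0) s0' else 0) \<partial>measure_pmf (\<pi> s))"
    proof (intro Bochner_Integration.integral_cong refl)
      fix a
      show "pmf (map_pmf (\<lambda>s'. (s,a,s')) (T s a)) (s0,a0,s0') = (if s = s0 \<and> a = a0 then pmf (T s0 a0) s0' else 0)"
      proof (cases "s = s0 \<and> a = a0")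
        case True
        then show ?thesis using pmf_map_inj'[of "\<lambda>s'. (s,a,s')" "T s a" s0'] by (auto simp: inj_def)
      next
        case False
        then show ?thesis by (auto simp: pmf_eq_0_set_pmf)
      qed
    qed
    also have "\<dots> = (if s = s0 then pmf (\<pi> s0) a0 * pmf (T s0 a0) s0' else 0)"
      by (subst integral_measure_pmf_real[where A="{a0}"]) (auto split: if_splits)
    finally show ?thesis .
  qed
  show ?thesis
    unfolding trip_eq
    apply (subst pmf_bind)
    apply (simp only: inner)
    by (subst integral_measure_pmf_real[where A="{s0}"]) (auto split: if_splits)
qed


lemma occ_eq: "occupancy T I \<gamma> \<pi> p = (\<Sum>t. \<gamma> ^ t * pmf (trip T I \<pi> t) p)"
proof -
  obtain s a s' where p: "p = (s,a,s')" by (cases p) auto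
  have "{x. step x t = (s,a,s')} = (\<lambda>x. step x t) -` {(s,a,s')}" for t by auto
  then show ?thesis by (simp add: p occupancy_def trip_def pmf_map)
qed

lemma summ_trip: "0 \<le> \<gamma> \<Longrightarrow> \<gamma> < 1 \<Longrightarrow> summable (\<lambda>t. \<gamma> ^ t * pmf (trip T I \<pi> t) p)"
proof (rule summable_comparison_test[where g="\<lambda>t. \<gamma> ^ t"])
  assume "0 \<le> \<gamma>" "\<gamma> < 1"
  then show "summable (\<lambda>t. \<gamma> ^ t)" by (intro summable_geometric) simp
  show "\<exists>N. \<forall>n\<ge>N. norm (\<gamma> ^ n * pmf (trip T I \<pi> n) p) \<le> \<gamma> ^ n"
    using \<open>0 \<le> \<gamma>\<close> by (intro exI[of _ 0] allI impI) (simp add: abs_mult mult_left_le pmf_le_1)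
qed

lemma integ_step:
  fixes g :: "'s::finite \<times> 'a::finite \<times> 's \<Rightarrow> real"
  shows "integrable (measure_pmf M) (\<lambda>x. g (step x t))"
proof -
  have "integrable (measure_pmf (map_pmf (\<lambda>x. step x t) M)) g"
    by (rule integrable_measure_pmf_finite) simp
  then show ?thesis by simp
qed

lemma disc_ret:
  fixes T :: "'s::finite \<Rightarrow> 'a::finite \<Rightarrow> 's pmf"
  assumes g0: "0 \<le> \<gamma>" and g1: "\<gamma> < 1"
  shows "disc_return T I \<gamma> R \<pi> =
    (\<Sum>p\<in>UNIV. (case p of (s,a,s') \<Rightarrow> R s a s') * occupancy T I \<gamma> \<pi> p)"
proof -
  define R' where "R' = (\<lambda>p. case p of (s,a,s') \<Rightarrow> R s a s')"
  have En: "measure_pmf.expectation (traj T I \<pi> n)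
               (\<lambda>x. \<Sum>t<n. \<gamma> ^ t * (case step x t of (s, a, s') \<Rightarrow> R s a s'))
     = (\<Sum>p\<in>UNIV. R' p * (\<Sum>t<n. \<gamma> ^ t * pmf (trip T I \<pi> t) p))" for n
  proof -
    have "measure_pmf.expectation (traj T I \<pi> n)
               (\<lambda>x. \<Sum>t<n. \<gamma> ^ t * (case step x t of (s, a, s') \<Rightarrow> R s a s'))
        = (\<Sum>t<n. measure_pmf.expectation (traj T I \<pi> n) (\<lambda>x. \<gamma> ^ t * R' (step x t)))"
      unfolding R'_def
      by (rule Bochner_Integration.integral_sum) (rule integ_step)
    also have "\<dots> = (\<Sum>t<n. \<gamma> ^ t * (\<Sum>p\<in>UNIV. R' p * pmf (trip T I \<pi> t) p))"
    proof (intro sum.cong refl)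
      fix t assume "t \<in> {..<n}"
      then have "map_pmf (\<lambda>x. step x t) (traj T I \<pi> n) = trip T I \<pi> t"
        by (intro map_step_traj) auto
      then have "measure_pmf.expectation (traj T I \<pi> n) (\<lambda>x. \<gamma> ^ t * R' (step x t))
          = measure_pmf.expectation (trip T I \<pi> t) (\<lambda>p. \<gamma> ^ t * R' p)"
      proof -
        have "measure_pmf.expectation (map_pmf (\<lambda>x. step x t) (traj T I \<pi> n)) (\<lambda>p. \<gamma> ^ t * R' p)
          = measure_pmf.expectation (traj T I \<pi> n) (\<lambda>x. \<gamma> ^ t * R' (step x t))"
          by (rule integral_map_pmf)
        then show ?thesis using \<open>map_pmf (\<lambda>x. step x t) (traj T I \<pi> n) = trip T I \<pi> t\<close> by (simp only:)
      qed
      also have "\<dots> = \<gamma> ^ t * measure_pmf.expectation (trip T I \<pi> t) R'" by simp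
      also have "\<dots> = \<gamma> ^ t * (\<Sum>p\<in>UNIV. R' p * pmf (trip T I \<pi> t) p)"
        by (subst integral_measure_pmf_real[where A=UNIV]) auto
      finally show "measure_pmf.expectation (traj T I \<pi> n) (\<lambda>x. \<gamma> ^ t * R' (step x t))
          = \<gamma> ^ t * (\<Sum>p\<in>UNIV. R' p * pmf (trip T I \<pi> t) p)" .
    qed
    also have "\<dots> = (\<Sum>p\<in>UNIV. R' p * (\<Sum>t<n. \<gamma> ^ t * pmf (trip T I \<pi> t) p))"
      unfolding sum_distrib_left sum_distrib_right
      by (subst sum.swap) (simp add: mult_ac)
    finally show ?thesis .
  qed
  have "(\<lambda>n. \<Sum>p\<in>UNIV. R' p * (\<Sum>t<n. \<gamma> ^ t * pmf (trip T I \<pi> t) p))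
     \<longlonglongrightarrow> (\<Sum>p\<in>UNIV. R' p * occupancy T I \<gamma> \<pi> p)"
    unfolding occ_eq
    by (intro tendsto_sum tendsto_mult tendsto_const summable_LIMSEQ summ_trip g0 g1)
  then show ?thesis unfolding disc_return_def En R'_def by (rule limI)
qed


lemma summ_gen: "0 \<le> (\<gamma>::real) \<Longrightarrow> \<gamma> < 1 \<Longrightarrow> (\<And>t. 0 \<le> f t \<and> f t \<le> 1) \<Longrightarrow> summable (\<lambda>t. \<gamma> ^ t * f t)"
proof (rule summable_comparison_test[where g="\<lambda>t. \<gamma> ^ t"])
  assume a: "0 \<le> \<gamma>" "\<gamma> < 1" "\<And>t. 0 \<le> f t \<and> f t \<le> 1"
  then show "summable (\<lambda>t. \<gamma> ^ t)" by (intro summable_geometric) simp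
  show "\<exists>N. \<forall>n\<ge>N. norm (\<gamma> ^ n * f n) \<le> \<gamma> ^ n"
    using a by (intro exI[of _ 0] allI impI) (simp add: abs_mult mult_left_le)
qed

definition Dv where "Dv T I (\<gamma>::real) \<pi> s = (\<Sum>t. \<gamma> ^ t * pmf (stdist T I \<pi> t) s)"

lemma summ_D: "0 \<le> \<gamma> \<Longrightarrow> \<gamma> < 1 \<Longrightarrow> summable (\<lambda>t. \<gamma> ^ t * pmf (stdist T I \<pi> t) s)"
  by (rule summ_gen) (auto simp: pmf_le_1)

lemma occ_marg:
  fixes T :: "'s::finite \<Rightarrow> 'a::finite \<Rightarrow> 's pmf"
  assumes g0: "0 \<le> \<gamma>" and g1: "\<gamma> < 1"
  shows "(\<Sum>s'\<in>UNIV. occupancy T I \<gamma> \<pi> (s,a,s')) = pmf (\<pi> s) a * Dv T I \<gamma> \<pi> s"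
proof -
  have "(\<Sum>s'\<in>UNIV. occupancy T I \<gamma> \<pi> (s,a,s'))
     = (\<Sum>s'\<in>UNIV. \<Sum>t. \<gamma> ^ t * pmf (trip T I \<pi> t) (s,a,s'))"
    by (simp add: occ_eq)
  also have "\<dots> = (\<Sum>t. \<Sum>s'\<in>UNIV. \<gamma> ^ t * pmf (trip T I \<pi> t) (s,a,s'))"
    by (rule suminf_sum[symmetric]) (rule summ_trip[OF g0 g1])
  also have "\<dots> = (\<Sum>t. (\<gamma> ^ t * pmf (stdist T I \<pi> t) s) * pmf (\<pi> s) a)"
  proof -
    have "(\<Sum>s'\<in>UNIV. \<gamma> ^ t * pmf (trip T I \<pi> t) (s,a,s')) = (\<gamma> ^ t * pmf (stdist T I \<pi> t) s) * pmf (\<pi> s) a" for t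
    proof -
      have "(\<Sum>s'\<in>UNIV. \<gamma> ^ t * pmf (trip T I \<pi> t) (s,a,s'))
        = (\<Sum>s'\<in>UNIV. (\<gamma> ^ t * pmf (stdist T I \<pi> t) s * pmf (\<pi> s) a) * pmf (T s a) s')"
        by (intro sum.cong refl) (simp add: pmf_trip mult_ac)
      also have "\<dots> = (\<gamma> ^ t * pmf (stdist T I \<pi> t) s * pmf (\<pi> s) a) * (\<Sum>s'\<in>UNIV. pmf (T s a) s')"
        by (rule sum_distrib_left[symmetric])
      also have "(\<Sum>s'\<in>UNIV. pmf (T s a) s') = 1" by (rule sum_pmf_eq_1) auto
      finally show ?thesis by simp
    qed
    then show ?thesis by simp
  qed
  also have "\<dots> = (\<Sum>t. \<gamma> ^ t * pmf (stdist T I \<pi> t) s) * pmf (\<pi> s) a"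
    by (rule suminf_mult2[symmetric]) (rule summ_D[OF g0 g1])
  finally show ?thesis by (simp add: Dv_def mult_ac)
qed

lemma D_marg:
  fixes T :: "'s::finite \<Rightarrow> 'a::finite \<Rightarrow> 's pmf"
  assumes g0: "0 \<le> \<gamma>" and g1: "\<gamma> < 1"
  shows "(\<Sum>a\<in>UNIV. \<Sum>s'\<in>UNIV. occupancy T I \<gamma> \<pi> (s,a,s')) = Dv T I \<gamma> \<pi> s"
proof -
  have "(\<Sum>a\<in>UNIV. \<Sum>s'\<in>UNIV. occupancy T I \<gamma> \<pi> (s,a,s')) = (\<Sum>a\<in>UNIV. pmf (\<pi> s) a) * Dv T I \<gamma> \<pi> s"
    by (simp add: occ_marg[OF g0 g1] sum_distrib_right)
  also have "(\<Sum>a\<in>UNIV. pmf (\<pi> s) a) = 1" by (rule sum_pmf_eq_1) auto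
  finally show ?thesis by simp
qed

lemma D_pos:
  assumes g0: "0 < \<gamma>" and g1: "\<gamma> < 1" and p: "0 < pmf (stdist T I \<pi> t) s"
  shows "0 < Dv T I \<gamma> \<pi> s"
proof -
  have "0 < \<gamma> ^ t * pmf (stdist T I \<pi> t) s" using g0 p by simp
  also have "\<gamma> ^ t * pmf (stdist T I \<pi> t) s = (\<Sum>i\<in>{t}. \<gamma> ^ i * pmf (stdist T I \<pi> i) s)" by simp
  also have "\<dots> \<le> Dv T I \<gamma> \<pi> s" unfolding Dv_def
    using g0 g1 by (intro sum_le_suminf summ_D) auto
  finally show ?thesis .
qed

lemma determ:
  fixes T :: "'s::finite \<Rightarrow> 'a::finite \<Rightarrow> 's pmf"
  assumes g0: "0 < \<gamma>" and g1: "\<gamma> < 1"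
    and eq: "occupancy T I \<gamma> \<pi>1 = occupancy T I \<gamma> \<pi>2"
  shows "traj T I \<pi>1 k = traj T I \<pi>2 k"
proof -
  have Deq: "Dv T I \<gamma> \<pi>1 s = Dv T I \<gamma> \<pi>2 s" for s
    using D_marg[of \<gamma> T I \<pi>1 s] D_marg[of \<gamma> T I \<pi>2 s] g0 g1 eq by simp
  have peq: "\<pi>1 s = \<pi>2 s" if "0 < Dv T I \<gamma> \<pi>1 s" for s
  proof (rule pmf_eqI)
    fix a
    have "pmf (\<pi>1 s) a * Dv T I \<gamma> \<pi>1 s = pmf (\<pi>2 s) a * Dv T I \<gamma> \<pi>1 s"
      using occ_marg[of \<gamma> T I \<pi>1 s a] occ_marg[of \<gamma> T I \<pi>2 s a] g0 g1 eq Deq[of s] by auto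
    then show "pmf (\<pi>1 s) a = pmf (\<pi>2 s) a" using that by simp
  qed
  show ?thesis
  proof (induction k)
    case 0 then show ?case by simp
  next
    case (Suc k)
    have "traj T I \<pi>1 (Suc k) = bind_pmf (traj T I \<pi>1 k) (\<lambda>(h, s).
       bind_pmf (\<pi>2 s) (\<lambda>a. map_pmf (\<lambda>s'. (h @ [(s, a)], s')) (T s a)))"
    proof (simp only: traj.simps, intro bind_pmf_cong refl)
      fix x assume x: "x \<in> set_pmf (traj T I \<pi>1 k)"
      obtain h s where xs: "x = (h, s)" by (cases x)
      have "s \<in> set_pmf (stdist T I \<pi>1 k)" using x xs unfolding stdist_def by force
      then have "0 < pmf (stdist T I \<pi>1 k) s" by (simp add: pmf_positive)
      then have "\<pi>1 s = \<pi>2 s" by (intro peq D_pos[OF g0 g1])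
      then show "(case x of (h, s) \<Rightarrow> \<pi>1 s \<bind> (\<lambda>a. map_pmf (\<lambda>s'. (h @ [(s, a)], s')) (T s a))) =
         (case x of (h, s) \<Rightarrow> \<pi>2 s \<bind> (\<lambda>a. map_pmf (\<lambda>s'. (h @ [(s, a)], s')) (T s a)))"
        by (simp add: xs)
    qed
    also have "\<dots> = traj T I \<pi>2 (Suc k)" using Suc.IH by simp
    finally show ?case .
  qed
qed


lemma OM_sub_FO:
  fixes T :: "'s::finite \<Rightarrow> 'a::finite \<Rightarrow> 's pmf"
  shows "Ord_OMORL T I \<subseteq> Ord_FOMR T I"
proof
  fix Ordr assume "Ordr \<in> Ord_OMORL T I"
  then obtain k R f \<gamma> where Ordr: "Ordr = ord_of (J_OMORL T I k R f \<gamma>)" and g: "0 \<le> \<gamma>" "\<gamma> < 1"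
    unfolding Ord_OMORL_def by blast
  define F where "F = (\<lambda>m. f (map (\<lambda>i. \<Sum>p\<in>UNIV. (case p of (s,a,s') \<Rightarrow> R i s a s') * m p) [0..<k]))"
  have "J_OMORL T I k R f \<gamma> = (\<lambda>\<pi>. F (occupancy T I \<gamma> \<pi>))"
    by (rule ext) (simp add: J_OMORL_def F_def disc_ret[OF g])
  then show "Ordr \<in> Ord_FOMR T I" unfolding Ord_FOMR_def Ordr using g
    by (intro CollectI exI[of _ F] exI[of _ \<gamma>]) simp
qed

lemma FO_sub_OM:
  fixes T :: "'s::finite \<Rightarrow> 'a::finite \<Rightarrow> 's pmf"
  shows "Ord_FOMR T I \<subseteq> Ord_OMORL T I"
proof
  fix Ordr assume "Ordr \<in> Ord_FOMR T I"
  then obtain f \<gamma> where Ordr: "Ordr = ord_of (\<lambda>\<pi>. f (occupancy T I \<gamma> \<pi>))" and g: "0 \<le> \<gamma>" "\<gamma> < 1"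
    unfolding Ord_FOMR_def by blast
  define n where "n = card (UNIV :: ('s \<times> 'a \<times> 's) set)"
  obtain e where e: "bij_betw e {0..<n} (UNIV :: ('s \<times> 'a \<times> 's) set)"
    using ex_bij_betw_nat_finite[of "UNIV :: ('s \<times> 'a \<times> 's) set"] unfolding n_def by auto
  define R where "R = (\<lambda>i s a s'. if e i = (s,a,s') then (1::real) else 0)"
  define F where "F = (\<lambda>xs::real list. f (\<lambda>p. xs ! inv_into {0..<n} e p))"
  have dr: "disc_return T I \<gamma> (R i) \<pi> = occupancy T I \<gamma> \<pi> (e i)" for i \<pi>
  proof -
    have "(case p of (s,a,s') \<Rightarrow> R i s a s') = (if e i = p then 1 else 0)" for p
      by (cases p) (auto simp: R_def)
    then have "disc_return T I \<gamma> (R i) \<pi> = (\<Sum>p\<in>UNIV. (if e i = p then 1 else 0) * occupancy T I \<gamma> \<pi> p)"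
      by (simp add: disc_ret[OF g])
    also have "\<dots> = (\<Sum>p\<in>UNIV. if e i = p then occupancy T I \<gamma> \<pi> p else 0)"
      by (rule sum.cong) auto
    finally show ?thesis by simp
  qed
  have "J_OMORL T I n R F \<gamma> \<pi> = f (occupancy T I \<gamma> \<pi>)" for \<pi>
  proof -
    have "map (\<lambda>i. disc_return T I \<gamma> (R i) \<pi>) [0..<n] ! inv_into {0..<n} e p = occupancy T I \<gamma> \<pi> p" for p
    proof -
      have iv: "inv_into {0..<n} e p \<in> {0..<n}"
        using bij_betw_inv_into[OF e] by (auto simp: bij_betw_def)
      have "e (inv_into {0..<n} e p) = p"
        using e by (simp add: bij_betw_def f_inv_into_f)
      with iv show ?thesis by (simp add: dr)
    qed
    then show ?thesis by (simp add: J_OMORL_def F_def)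
  qed
  then have "(\<lambda>\<pi>. f (occupancy T I \<gamma> \<pi>)) = J_OMORL T I n R F \<gamma>" by auto
  then show "Ordr \<in> Ord_OMORL T I" unfolding Ord_OMORL_def Ordr using g
    by (intro CollectI exI[of _ n] exI[of _ R] exI[of _ F] exI[of _ \<gamma>]) simp
qed

lemma FO_sub_FT:
  fixes T :: "'s::finite \<Rightarrow> 'a::finite \<Rightarrow> 's pmf"
  shows "Ord_FOMR T I \<subseteq> Ord_FTLR T I"
proof
  fix Ordr assume "Ordr \<in> Ord_FOMR T I"
  then obtain f \<gamma> where Ordr: "Ordr = ord_of (\<lambda>\<pi>. f (occupancy T I \<gamma> \<pi>))"
    unfolding Ord_FOMR_def by blast
  define F where "F = (\<lambda>L::nat \<Rightarrow> (('s \<times> 'a) list \<times> 's) pmf. f (\<lambda>(s, a, s').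
     (\<Sum>t. \<gamma> ^ t * measure_pmf.prob (L (Suc t)) {x. step x t = (s, a, s')})))"
  have "(\<lambda>\<pi>. f (occupancy T I \<gamma> \<pi>)) = (\<lambda>\<pi>. F (lottery T I \<pi>))"
    by (simp add: F_def occupancy_def lottery_def)
  then show "Ordr \<in> Ord_FTLR T I" unfolding Ord_FTLR_def Ordr
    by (intro CollectI exI[of _ F]) simp
qed

lemma FT_sub_FO:
  fixes T :: "'s::finite \<Rightarrow> 'a::finite \<Rightarrow> 's pmf"
  shows "Ord_FTLR T I \<subseteq> Ord_FOMR T I"
proof
  fix Ordr assume "Ordr \<in> Ord_FTLR T I"
  then obtain f where Ordr: "Ordr = ord_of (\<lambda>\<pi>. f (lottery T I \<pi>))"
    unfolding Ord_FTLR_def by blast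
  define F where "F = (\<lambda>m. f (lottery T I (SOME \<pi>. occupancy T I (1/2) \<pi> = m)))"
  have "F (occupancy T I (1/2) \<pi>) = f (lottery T I \<pi>)" for \<pi>
  proof -
    define \<pi>' where "\<pi>' = (SOME \<pi>'. occupancy T I (1/2) \<pi>' = occupancy T I (1/2) \<pi>)"
    have "occupancy T I (1/2) \<pi>' = occupancy T I (1/2) \<pi>"
      unfolding \<pi>'_def by (rule someI[of _ \<pi>]) simp
    then have "lottery T I \<pi>' = lottery T I \<pi>"
      unfolding lottery_def by (intro ext determ[of "1/2"]) auto
    then show ?thesis by (simp add: F_def \<pi>'_def)
  qed
  then have "(\<lambda>\<pi>. f (lottery T I \<pi>)) = (\<lambda>\<pi>. F (occupancy T I (1/2) \<pi>))" by simp
  then show "Ordr \<in> Ord_FOMR T I" unfolding Ord_FOMR_def Ordr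
    by (intro CollectI exI[of _ F] exI[of _ "1/2"]) simp
qed

theorem theorem2:
  fixes T :: "'s::finite \<Rightarrow> 'a::finite \<Rightarrow> 's pmf" and I :: "'s pmf"
  shows "Ord_OMORL T I = Ord_FOMR T I \<and> Ord_FOMR T I = Ord_FTLR T I"
  using OM_sub_FO FO_sub_OM FO_sub_FT FT_sub_FO by (metis subset_antisym)

end
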